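(* Let $q$ be a prime power and let $m>a\geq 0$, $n>b\geq 0$, $h\geq 0$ be integers with $h\leq (m-a)(n-b)-\max\{m-a,n-b\}$. Let $\mathcal{C}_{\mathsf{out}}\in\mathbb{C}^{\mathsf{MR}}_{m\times n}(a,b,0)$ be an $[mn,(m-a)(n-b)]$ code over $\mathbb{F}_q$ with generator matrix $\mathbf{G}_{\mathsf{out}}\in\mathbb{F}_q^{(m-a)(n-b)\times mn}$. Let $s\geq (m-a)(n-b)$, let $\mathbf{g}\in\mathbb{F}_{q^s}^{(m-a)(n-b)}$ have entries that are linearly independent over $\mathbb{F}_q$, and let $\mathbf{G}_{\mathsf{in}}$ be the generator matrix (as in the definition below) of the Gabidulin code $\mathcal{C}_{\mathsf{in}}=\mathsf{Gab}\big((m-a)(n-b),(m-a)(n-b)-h,\mathbf{g}\big)$ over $\mathbb{F}_{q^s}$. Then the code over $\mathbb{F}_{q^s}$ spanned by the rows of $\mathbf{G}_{\mathsf{in}}\cdot\mathbf{G}_{\mathsf{out}}$ corrects every erasure pattern in $$\{\mathcal{E}'\cup\mathcal{I}\ \mid\ \mathcal{E}'\in\mathbb{E}^{\max}_{m\times n}(a,b,0),\ \mathcal{I}\subset([m]\times[n])\setminus\mathcal{E}',\ |\mathcal{I}|=h\}.$$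
   Context: Positions of vectors in $\mathbb{F}^{mn}$ are identified with the grid $[m]\times[n]$, where $[k]=\{1,\dots,k\}$. For linear codes $\mathcal{C}_1\subseteq\mathbb{F}^m$, $\mathcal{C}_2\subseteq\mathbb{F}^n$ with generator matrices $\mathbf{G}_1,\mathbf{G}_2$, $\mathcal{C}_1\otimes\mathcal{C}_2$ is the row span of the Kronecker product $\mathbf{G}_1\otimes\mathbf{G}_2$ (the $m\times n$ arrays with all columns in $\mathcal{C}_1$ and all rows in $\mathcal{C}_2$). A code for the topology $T_{m\times n}(a,b,h)$ is a linear code over a finite field $\mathbb{F}$ with a parity-check matrix $\begin{pmatrix}\mathbf{H}_{\mathsf{local}}\\ \mathbf{H}_{\mathsf{global}}\end{pmatrix}$, where $\mathbf{H}_{\mathsf{local}}$ is a parity-check matrix of $\mathcal{C}_{\mathsf{col}}\otimes\mathcal{C}_{\mathsf{row}}$ for some linear $[m,\geq m-a]$ code $\mathcal{C}_{\mathsf{col}}$ and $[n,\geq n-b]$ code $\mathcal{C}_{\mathsf{row}}$ over $\mathbb{F}$, and $\mathbf{H}_{\mathsf{global}}$ is an arbitrary $h\times mn$ matrix over $\mathbb{F}$; $\mathbb{C}_{m\times n}(a,b,h)$ denotes the set of all such codes. A code corrects an erasure pattern $\mathcal{E}\subseteq[m]\times[n]$ if no two distinct codewords agree on all positions outside $\mathcal{E}$. $\mathcal{E}$ is correctable in $T_{m\times n}(a,b,h)$ if some code in $\mathbb{C}_{m\times n}(a,b,h)$ corrects it; $\mathbb{E}_{m\times n}(a,b,h)$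 is the set of such patterns and $\mathbb{E}^{\max}_{m\times n}(a,b,h)$ the set of those not properly contained in another correctable pattern. A code in $\mathbb{C}_{m\times n}(a,b,h)$ is maximally recoverable (MR) if it corrects every pattern in $\mathbb{E}_{m\times n}(a,b,h)$; $\mathbb{C}^{\mathsf{MR}}_{m\times n}(a,b,h)$ is the set of MR codes. Gabidulin code: for $\mathbf{g}=(g_1,\dots,g_N)\in\mathbb{F}_{q^s}^N$ with $g_i$ linearly independent over $\mathbb{F}_q$, $\mathsf{Gab}(N,k,\mathbf{g})$ is the $[N,k]$ code over $\mathbb{F}_{q^s}$ spanned by the rows of the $k\times N$ matrix whose $(i,j)$ entry is $g_j^{q^{i-1}}$. *)

theory Defs
  imports "HOL-Algebra.Algebra" "HOL-Computational_Algebra.Primes"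
begin

definition vecs :: "('a,'m) ring_scheme \<Rightarrow> 'p set \<Rightarrow> ('p \<Rightarrow> 'a) set" where
  "vecs R P = {v. (\<forall>p\<in>P. v p \<in> carrier R) \<and> (\<forall>p. p \<notin> P \<longrightarrow> v p = \<zero>\<^bsub>R\<^esub>)}"

definition span_rows :: "('a,'m) ring_scheme \<Rightarrow> 'p set \<Rightarrow> 'i set \<Rightarrow> ('i \<Rightarrow> 'p \<Rightarrow> 'a) \<Rightarrow> ('p \<Rightarrow> 'a) set" where
  "span_rows R P I vs = {v. \<exists>c. (\<forall>i\<in>I. c i \<in> carrier R) \<and>
      v = (\<lambda>p. if p \<in> P then (\<Oplus>\<^bsub>R\<^esub> i\<in>I. c i \<otimes>\<^bsub>R\<^esub> vs i p) else \<zero>\<^bsub>R\<^esub>)}"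

definition lin_indep_rows :: "('a,'m) ring_scheme \<Rightarrow> 'p set \<Rightarrow> 'i set \<Rightarrow> ('i \<Rightarrow> 'p \<Rightarrow> 'a) \<Rightarrow> bool" where
  "lin_indep_rows R P I vs \<longleftrightarrow> (\<forall>c. (\<forall>i\<in>I. c i \<in> carrier R) \<longrightarrow>
      (\<forall>p\<in>P. (\<Oplus>\<^bsub>R\<^esub> i\<in>I. c i \<otimes>\<^bsub>R\<^esub> vs i p) = \<zero>\<^bsub>R\<^esub>) \<longrightarrow> (\<forall>i\<in>I. c i = \<zero>\<^bsub>R\<^esub>))"

definition lin_code :: "('a,'m) ring_scheme \<Rightarrow> 'p set \<Rightarrow> ('p \<Rightarrow> 'a) set \<Rightarrow> bool" where
  "lin_code R P C \<longleftrightarrow> C \<subseteq> vecs R P \<and> (\<lambda>p. \<zero>\<^bsub>R\<^esub>) \<in> C \<and>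
     (\<forall>x\<in>C. \<forall>y\<in>C. (\<lambda>p. x p \<oplus>\<^bsub>R\<^esub> y p) \<in> C) \<and>
     (\<forall>c\<in>carrier R. \<forall>x\<in>C. (\<lambda>p. c \<otimes>\<^bsub>R\<^esub> x p) \<in> C)"

definition code_dim :: "('a,'m) ring_scheme \<Rightarrow> 'p set \<Rightarrow> ('p \<Rightarrow> 'a) set \<Rightarrow> nat \<Rightarrow> bool" where
  "code_dim R P C k \<longleftrightarrow> (\<exists>vs. (\<forall>i<k. vs i \<in> C) \<and> lin_indep_rows R P {..<k} vs \<and>
      C = span_rows R P {..<k} vs)"

definition grid :: "nat \<Rightarrow> nat \<Rightarrow> (nat \<times> nat) set" where
  "grid m n = {1..m} \<times> {1..n}"

definition tensor_code :: "('a,'m) ring_scheme \<Rightarrow> nat \<Rightarrow> nat \<Rightarrow> (nat \<Rightarrow> 'a) set \<Rightarrow> (nat \<Rightarrow> 'a) set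
    \<Rightarrow> (nat \<times> nat \<Rightarrow> 'a) set" where
  "tensor_code R m n Ccol Crow = {x \<in> vecs R (grid m n).
      (\<forall>j\<in>{1..n}. (\<lambda>i. if i \<in> {1..m} then x (i,j) else \<zero>\<^bsub>R\<^esub>) \<in> Ccol) \<and>
      (\<forall>i\<in>{1..m}. (\<lambda>j. if j \<in> {1..n} then x (i,j) else \<zero>\<^bsub>R\<^esub>) \<in> Crow)}"

text \<open>Codes for the topology T_{m x n}(a,b,h) over the field R: the kernel of
  (H_local; H_global), where ker H_local = Ccol (x) Crow.\<close>
definition topo_code :: "('a,'m) ring_scheme \<Rightarrow> nat \<Rightarrow> nat \<Rightarrow> nat \<Rightarrow> nat \<Rightarrow> nat
    \<Rightarrow> (nat \<times> nat \<Rightarrow> 'a) set \<Rightarrow> bool" where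
  "topo_code R m n a b h C \<longleftrightarrow> (\<exists>Ccol Crow H.
      lin_code R {1..m} Ccol \<and> (\<exists>k. k \<ge> m - a \<and> code_dim R {1..m} Ccol k) \<and>
      lin_code R {1..n} Crow \<and> (\<exists>k. k \<ge> n - b \<and> code_dim R {1..n} Crow k) \<and>
      (\<forall>i\<in>{1..h}. \<forall>p\<in>grid m n. H i p \<in> carrier R) \<and>
      C = {x \<in> tensor_code R m n Ccol Crow.
             \<forall>i\<in>{1..h}. (\<Oplus>\<^bsub>R\<^esub> p\<in>grid m n. H i p \<otimes>\<^bsub>R\<^esub> x p) = \<zero>\<^bsub>R\<^esub>})"

definition corrects :: "nat \<Rightarrow> nat \<Rightarrow> (nat \<times> nat \<Rightarrow> 'a) set \<Rightarrow> (nat \<times> nat) set \<Rightarrow> bool" where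
  "corrects m n C E \<longleftrightarrow> (\<forall>x\<in>C. \<forall>y\<in>C. (\<forall>p\<in>grid m n - E. x p = y p) \<longrightarrow> x = y)"

text \<open>Correctable patterns: correctable by some code for the topology over some
  finite field (every finite field is isomorphic to one with carrier in nat).\<close>
definition correctable :: "nat \<Rightarrow> nat \<Rightarrow> nat \<Rightarrow> nat \<Rightarrow> nat \<Rightarrow> (nat \<times> nat) set \<Rightarrow> bool" where
  "correctable m n a b h E \<longleftrightarrow> E \<subseteq> grid m n \<and>
     (\<exists>(F :: nat ring) C. field F \<and> finite (carrier F) \<and> topo_code F m n a b h C \<and> corrects m n C E)"

definition max_correctable :: "nat \<Rightarrow> nat \<Rightarrow> nat \<Rightarrow> nat \<Rightarrow> nat \<Rightarrow> (nat \<times> nat) set \<Rightarrow> bool" where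
  "max_correctable m n a b h E \<longleftrightarrow> correctable m n a b h E \<and>
     (\<forall>E'. correctable m n a b h E' \<longrightarrow> \<not> E \<subset> E')"

definition MR_code :: "('a,'m) ring_scheme \<Rightarrow> nat \<Rightarrow> nat \<Rightarrow> nat \<Rightarrow> nat \<Rightarrow> nat
    \<Rightarrow> (nat \<times> nat \<Rightarrow> 'a) set \<Rightarrow> bool" where
  "MR_code R m n a b h C \<longleftrightarrow> topo_code R m n a b h C \<and>
     (\<forall>E. correctable m n a b h E \<longrightarrow> corrects m n C E)"

definition gab_gen :: "('a,'m) ring_scheme \<Rightarrow> nat \<Rightarrow> (nat \<Rightarrow> 'a) \<Rightarrow> nat \<Rightarrow> nat \<Rightarrow> 'a" where
  "gab_gen L q g i j = g j [^]\<^bsub>L\<^esub> (q ^ (i - 1))"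

definition mat_mult :: "('a,'m) ring_scheme \<Rightarrow> 'j set \<Rightarrow> ('i \<Rightarrow> 'j \<Rightarrow> 'a) \<Rightarrow> ('j \<Rightarrow> 'p \<Rightarrow> 'a)
    \<Rightarrow> 'i \<Rightarrow> 'p \<Rightarrow> 'a" where
  "mat_mult R J A B i p = (\<Oplus>\<^bsub>R\<^esub> j\<in>J. A i j \<otimes>\<^bsub>R\<^esub> B j p)"

end

theory Submission
  imports Defs
begin

lemma (in cring) binomial_thm:
  assumes x: "x \<in> carrier R" and y: "y \<in> carrier R"
  shows "(x \<oplus> y) [^] n = (\<Oplus> i\<in>{..n}. add_pow R (n choose i) (x [^] i \<otimes> y [^] (n - i)))"
proof (induction n)
  case 0
  then show ?case using x y by simp
next
  case (Suc n)
  define T where "T = (\<lambda>n i. add_pow R (n choose i) (x [^] i \<otimes> y [^] (n - i)))"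
  have Tc: "\<And>n i. T n i \<in> carrier R" unfolding T_def using x y by simp
  have IH: "(x \<oplus> y) [^] n = (\<Oplus> i\<in>{..n}. T n i)" using Suc unfolding T_def by simp
  define A where "A = (\<Oplus> i\<in>{..n}. add_pow R (n choose i) (x [^] Suc i \<otimes> y [^] (n - i)))"
  define B where "B = (\<Oplus> i\<in>{..n}. add_pow R (n choose i) (x [^] i \<otimes> y [^] (Suc n - i)))"
  define C where "C = (\<Oplus> i\<in>{..n}. add_pow R (n choose Suc i) (x [^] Suc i \<otimes> y [^] (n - i)))"
  have AC: "A \<in> carrier R" "B \<in> carrier R" "C \<in> carrier R" unfolding A_def B_def C_def using x y by auto
  have "(x \<oplus> y) [^] Suc n = (\<Oplus> i\<in>{..n}. T n i) \<otimes> (x \<oplus> y)" using IH by simp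
  also have "\<dots> = (\<Oplus> i\<in>{..n}. T n i) \<otimes> x \<oplus> (\<Oplus> i\<in>{..n}. T n i) \<otimes> y"
    using x y Tc by (simp add: r_distr)
  also have "(\<Oplus> i\<in>{..n}. T n i) \<otimes> x = A"
  proof -
    have "(\<Oplus> i\<in>{..n}. T n i) \<otimes> x = (\<Oplus> i\<in>{..n}. T n i \<otimes> x)"
      using x Tc by (simp add: finsum_ldistr)
    also have "\<dots> = A" unfolding A_def T_def
      using x y by (intro finsum_cong') (auto simp: add_pow_ldistr add_pow_rdistr m_assoc m_comm[of _ x] nat_pow_Suc2)
    finally show ?thesis .
  qed
  also have "(\<Oplus> i\<in>{..n}. T n i) \<otimes> y = B"
  proof -
    have "(\<Oplus> i\<in>{..n}. T n i) \<otimes> y = (\<Oplus> i\<in>{..n}. T n i \<otimes> y)"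
      using y Tc by (simp add: finsum_ldistr)
    also have "\<dots> = B" unfolding B_def T_def
    proof (intro finsum_cong')
      fix i assume "i \<in> {..n}"
      then have "Suc n - i = Suc (n - i)" by auto
      then show "add_pow R (n choose i) (x [^] i \<otimes> y [^] (n - i)) \<otimes> y = add_pow R (n choose i) (x [^] i \<otimes> y [^] (Suc n - i))"
        using x y by (simp add: add_pow_ldistr m_assoc nat_pow_Suc)
    qed (use x y in auto)
    finally show ?thesis .
  qed
  also have "B = C \<oplus> y [^] Suc n"
  proof -
    let ?f = "\<lambda>i. add_pow R (n choose i) (x [^] i \<otimes> y [^] (Suc n - i))"
    have "(\<Oplus> i\<in>{..Suc n}. ?f i) = ?f (Suc n) \<oplus> B"
      unfolding B_def using x y by (subst finsum_Suc) auto
    also have "?f (Suc n) = \<zero>" by (simp add: binomial_eq_0)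
    finally have 1: "(\<Oplus> i\<in>{..Suc n}. ?f i) = B" using AC by simp
    have "(\<Oplus> i\<in>{..Suc n}. ?f i) = (\<Oplus> i\<in>{..n}. ?f (Suc i)) \<oplus> ?f 0"
      using x y by (subst finsum_Suc2) auto
    also have "(\<Oplus> i\<in>{..n}. ?f (Suc i)) = C" unfolding C_def by simp
    also have "?f 0 = y [^] Suc n" using y by simp
    finally show ?thesis using 1 by simp
  qed
  also have "(\<Oplus> i\<in>{..Suc n}. T (Suc n) i) = A \<oplus> C \<oplus> y [^] Suc n"
  proof -
    have "(\<Oplus> i\<in>{..Suc n}. T (Suc n) i) = (\<Oplus> i\<in>{..n}. T (Suc n) (Suc i)) \<oplus> T (Suc n) 0"
      using Tc by (subst finsum_Suc2) auto
    also have "T (Suc n) 0 = y [^] Suc n" unfolding T_def using y by simp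
    also have "(\<Oplus> i\<in>{..n}. T (Suc n) (Suc i)) = (\<Oplus> i\<in>{..n}.
        add_pow R (n choose i) (x [^] Suc i \<otimes> y [^] (n - i)) \<oplus> add_pow R (n choose Suc i) (x [^] Suc i \<otimes> y [^] (n - i)))"
      unfolding T_def using x y by (intro finsum_cong') (auto simp: add.nat_pow_mult)
    also have "\<dots> = A \<oplus> C" unfolding A_def C_def using x y by (subst finsum_addf) auto
    finally show ?thesis .
  qed
  ultimately show ?case using AC y unfolding T_def by (simp add: a_assoc)
qed

lemma (in cring) choose_vanish:
  assumes p: "Factorial_Ring.prime (p::nat)" and p1: "add_pow R p \<one> = \<zero>" and z: "z \<in> carrier R"
    and i: "0 < i" "i < p"
  shows "add_pow R (p choose i) z = \<zero>"
proof -
  have "p dvd (p choose i)" using dvd_choose_prime[of i p] p i by auto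
  then obtain t where t: "p choose i = p * t" by auto
  have "add_pow R p z = add_pow R p (\<one> \<otimes> z)" using z by simp
  also have "\<dots> = add_pow R p \<one> \<otimes> z" using z by (simp add: add_pow_ldistr)
  also have "\<dots> = \<zero>" using p1 z by simp
  finally have "add_pow R p z = \<zero>" .
  then have "add_pow R t (add_pow R p z) = \<zero>" by simp
  then show ?thesis using z t by (simp add: add.nat_pow_pow)
qed

lemma (in cring) frob_prime:
  assumes p: "Factorial_Ring.prime (p::nat)" and p1: "add_pow R p \<one> = \<zero>"
    and x: "x \<in> carrier R" and y: "y \<in> carrier R"
  shows "(x \<oplus> y) [^] p = x [^] p \<oplus> y [^] p"
proof -
  let ?f = "\<lambda>i. add_pow R (p choose i) (x [^] i \<otimes> y [^] (p - i))"
  have fc: "?f \<in> A \<rightarrow> carrier R" for A using x y by auto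
  have p0: "p > 0" using p prime_gt_0_nat by blast
  have s1: "{..p} = insert p {..<p}" by auto
  have s2: "{..<p} = insert 0 {1..<p}" using p0 by auto
  have "(x \<oplus> y) [^] p = (\<Oplus> i\<in>{..p}. ?f i)" by (rule binomial_thm[OF x y])
  also have "\<dots> = ?f p \<oplus> (\<Oplus> i\<in>{..<p}. ?f i)" unfolding s1 using fc x y by (subst finsum_insert) auto
  also have "(\<Oplus> i\<in>{..<p}. ?f i) = ?f 0 \<oplus> (\<Oplus> i\<in>{1..<p}. ?f i)" unfolding s2 using fc x y by (subst finsum_insert) auto
  also have "(\<Oplus> i\<in>{1..<p}. ?f i) = (\<Oplus> i\<in>{1..<p}. \<zero>)"
    using x y by (intro finsum_cong') (auto intro!: choose_vanish[OF p p1])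
  also have "\<dots> = \<zero>" by simp
  finally show ?thesis using x y by simp
qed

lemma (in cring) frob_prime_pow:
  assumes p: "Factorial_Ring.prime (p::nat)" and p1: "add_pow R p \<one> = \<zero>"
    and x: "x \<in> carrier R" and y: "y \<in> carrier R"
  shows "(x \<oplus> y) [^] (p ^ e) = x [^] (p ^ e) \<oplus> y [^] (p ^ e)"
proof (induction e)
  case 0 then show ?case using x y by simp
next
  case (Suc e)
  have "(x \<oplus> y) [^] (p ^ Suc e) = ((x \<oplus> y) [^] (p ^ e)) [^] p"
    using x y by (simp add: nat_pow_pow mult.commute)
  also have "\<dots> = (x [^] (p ^ e)) [^] p \<oplus> (y [^] (p ^ e)) [^] p"
    using Suc x y by (simp add: frob_prime[OF p p1])
  finally show ?case using x y by (simp add: nat_pow_pow mult.commute)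
qed

lemma pow_carrier_upd: "([^]\<^bsub>R\<lparr>carrier := K\<rparr>\<^esub>) = (([^]\<^bsub>R\<^esub>) :: _ \<Rightarrow> nat \<Rightarrow> _)"
  by (simp add: nat_pow_def fun_eq_iff)

lemma add_pow_carrier_upd: "add_pow (R\<lparr>carrier := K\<rparr>) (n::nat) x = add_pow R n x"
  by (simp add: add_pow_def nat_pow_def)

locale gsetting = field L for L (structure) +
  fixes K q
  assumes K_sub: "subfield K L" and K_card: "card K = q"
    and q_pp: "\<exists>p k. Factorial_Ring.prime (p::nat) \<and> k > 0 \<and> q = p ^ k"
    and L_fin: "finite (carrier L)"
begin

lemma K_field: "field (L\<lparr>carrier := K\<rparr>)"
  using subfield_iff(2)[OF K_sub] .

lemma K_carrier: "K \<subseteq> carrier L"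
  by (rule subfieldE(3)[OF K_sub])

lemma K_zero: "\<zero> \<in> K" and K_one: "\<one> \<in> K"
  by (rule subringE(2)[OF subfieldE(1)[OF K_sub]], rule subringE(3)[OF subfieldE(1)[OF K_sub]])

lemma K_add: "x \<in> K \<Longrightarrow> y \<in> K \<Longrightarrow> x \<oplus> y \<in> K"
  and K_mult: "x \<in> K \<Longrightarrow> y \<in> K \<Longrightarrow> x \<otimes> y \<in> K"
  and K_neg: "x \<in> K \<Longrightarrow> \<ominus> x \<in> K"
  by (rule subringE(7)[OF subfieldE(1)[OF K_sub]], assumption+,
      rule subringE(6)[OF subfieldE(1)[OF K_sub]], assumption+,
      rule subringE(5)[OF subfieldE(1)[OF K_sub]], assumption+)

lemma K_inv: "x \<in> K \<Longrightarrow> x \<noteq> \<zero> \<Longrightarrow> inv x \<in> K"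
  using subfield_m_inv(1)[OF K_sub, of x] by simp

lemma K_fin: "finite K"
  using K_carrier L_fin by (rule finite_subset)

lemma q_ge2: "q \<ge> 2"
proof -
  have "{\<zero>, \<one>} \<subseteq> K" using K_zero K_one by auto
  then have "card {\<zero>, \<one>} \<le> card K" using K_fin card_mono by blast
  then show ?thesis using K_card by simp
qed

lemma char_p:
  obtains p e where "Factorial_Ring.prime (p::nat)" "e > 0" "q = p ^ e" "add_pow L p \<one> = \<zero>"
proof -
  obtain p e where p: "Factorial_Ring.prime (p::nat)" "e > 0" "q = p ^ e" using q_pp by blast
  interpret K': field "L\<lparr>carrier := K\<rparr>" by (rule K_field)
  have "order (add_monoid (L\<lparr>carrier := K\<rparr>)) = q" unfolding order_def using K_card by simp
  then have "add_pow (L\<lparr>carrier := K\<rparr>) q \<one> = \<zero>"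
    using group.pow_order_eq_1[OF K'.a_group, of \<one>] K_one by (simp add: add_pow_def)
  then have q1: "add_pow L q \<one> = \<zero>" by (simp add: add_pow_carrier_upd)
  define a where "a = add_pow L p \<one>"
  have ac: "a \<in> carrier L" unfolding a_def by simp
  have pw: "add_pow L (p ^ k) \<one> = a [^] k" for k
  proof (induction k)
    case 0 then show ?case by simp
  next
    case (Suc k)
    have "add_pow L (p ^ Suc k) \<one> = add_pow L (p ^ k) a"
      unfolding a_def using add.nat_pow_pow[of \<one> "p ^ k" p] by simp
    also have "\<dots> = add_pow L (p ^ k) (\<one> \<otimes> a)" using ac by simp
    also have "\<dots> = add_pow L (p ^ k) \<one> \<otimes> a" using ac by (simp add: add_pow_ldistr)
    finally show ?case using Suc by simp
  qed
  have "a [^] e = \<zero>" using pw[of e] q1 p by simp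
  then have "a = \<zero>"
  proof (rule contrapos_pp)
    assume "a \<noteq> \<zero>"
    then have "a \<in> carrier (Multiplicative_Group.mult_of L)" using ac by simp
    then have "a [^]\<^bsub>Multiplicative_Group.mult_of L\<^esub> e \<in> carrier (Multiplicative_Group.mult_of L)"
      by (rule monoid.nat_pow_closed[OF group.is_monoid[OF field_mult_group]])
    then show "a [^] e \<noteq> \<zero>" by (simp add: Multiplicative_Group.nat_pow_mult_of)
  qed
  then show ?thesis using that[OF p] unfolding a_def by simp
qed

lemma fix_K: assumes a: "\<alpha> \<in> K" shows "\<alpha> [^] q = \<alpha>"
proof (cases "\<alpha> = \<zero>")
  case True then show ?thesis using q_ge2 nat_pow_zero by simp
next
  case False
  interpret K': field "L\<lparr>carrier := K\<rparr>" by (rule K_field)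
  have g: "group (Multiplicative_Group.mult_of (L\<lparr>carrier := K\<rparr>))" by (rule K'.field_mult_group)
  have o: "order (Multiplicative_Group.mult_of (L\<lparr>carrier := K\<rparr>)) = q - 1"
    using K'.order_mult_of K_fin K_card by (simp add: order_def)
  have am: "\<alpha> \<in> carrier (Multiplicative_Group.mult_of (L\<lparr>carrier := K\<rparr>))" using a False by simp
  have "\<alpha> [^] (q - 1) = \<one>" using group.pow_order_eq_1[OF g am] o by (simp add: Multiplicative_Group.nat_pow_mult_of pow_carrier_upd)
  then have "\<alpha> [^] (q - 1) \<otimes> \<alpha> = \<alpha>" using a K_carrier by auto
  moreover have "\<alpha> [^] (q - 1) \<otimes> \<alpha> = \<alpha> [^] q"
  proof -
    have "q = Suc (q - 1)" using q_ge2 by simp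
    then show ?thesis by (metis nat_pow_Suc)
  qed
  ultimately show ?thesis by simp
qed

lemma fix_K_pow: assumes a: "\<alpha> \<in> K" shows "\<alpha> [^] (q ^ e) = \<alpha>"
proof (induction e)
  case 0 have "\<alpha> \<in> carrier L" by (rule subsetD[OF K_carrier a])
  then show ?case by simp
next
  case (Suc e)
  have ac: "\<alpha> \<in> carrier L" by (rule subsetD[OF K_carrier a])
  have "\<alpha> [^] (q ^ Suc e) = (\<alpha> [^] (q ^ e)) [^] q"
    using nat_pow_pow[OF ac, of "q ^ e" q] by (simp add: mult.commute)
  then show ?case using Suc fix_K[OF a] by simp
qed

lemma frob_add: assumes "x \<in> carrier L" "y \<in> carrier L"
  shows "(x \<oplus> y) [^] (q ^ e) = x [^] (q ^ e) \<oplus> y [^] (q ^ e)"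
proof -
  obtain p k where p: "Factorial_Ring.prime (p::nat)" "q = p ^ k" "add_pow L p \<one> = \<zero>"
    using char_p by (metis (no_types))
  have "q ^ e = p ^ (k * e)" using p by (simp add: power_mult)
  then show ?thesis using frob_prime_pow[OF p(1) p(3) assms] by simp
qed

lemma frob_smult: assumes "\<alpha> \<in> K" "x \<in> carrier L"
  shows "(\<alpha> \<otimes> x) [^] (q ^ e) = \<alpha> \<otimes> x [^] (q ^ e)"
proof -
  have "\<alpha> \<in> carrier L" by (rule subsetD[OF K_carrier assms(1)])
  then show ?thesis using assms(2) fix_K_pow[OF assms(1)] by (simp add: nat_pow_distrib)
qed

end

lemma card_set_mset_le_size: "card (set_mset M) \<le> size M"
  by (induction M) (auto simp: card_insert_if)

context gsetting
begin

fun lp :: "(nat \<Rightarrow> 'a) \<Rightarrow> nat \<Rightarrow> 'a list" where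
  "lp c 0 = []"
| "lp c (Suc i) = poly_add (monom (c (Suc i)) (q ^ i)) (lp c i)"

lemma lp_carrier: "(\<And>i. i \<in> {1..k} \<Longrightarrow> c i \<in> carrier L) \<Longrightarrow> set (lp c k) \<subseteq> carrier L"
proof (induction k)
  case 0 then show ?case by simp
next
  case (Suc k)
  have "c (Suc k) \<in> carrier L" using Suc.prems by simp
  then have "set (monom (c (Suc k)) (q ^ k)) \<subseteq> carrier L" by (rule monom_in_carrier)
  moreover have "set (lp c k) \<subseteq> carrier L" using Suc by simp
  ultimately show ?case by (simp del: poly_add.simps add: poly_add_in_carrier)
qed

lemma lp_eval:
  assumes "\<And>i. i \<in> {1..k} \<Longrightarrow> c i \<in> carrier L" and x: "x \<in> carrier L"
  shows "eval (lp c k) x = (\<Oplus> i\<in>{1..k}. c i \<otimes> x [^] (q ^ (i - 1)))"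
  using assms(1)
proof (induction k)
  case 0 then show ?case by simp
next
  case (Suc k)
  have cs: "c (Suc k) \<in> carrier L" using Suc.prems by simp
  have ck: "set (lp c k) \<subseteq> carrier L" using Suc.prems lp_carrier by simp
  have "eval (lp c (Suc k)) x = eval (monom (c (Suc k)) (q ^ k)) x \<oplus> eval (lp c k) x"
    using eval_poly_add[OF monom_in_carrier[OF cs] ck x] by simp
  also have "\<dots> = c (Suc k) \<otimes> x [^] (q ^ k) \<oplus> (\<Oplus> i\<in>{1..k}. c i \<otimes> x [^] (q ^ (i - 1)))"
    using Suc eval_monom[OF cs x] by simp
  also have "\<dots> = (\<Oplus> i\<in>{1..Suc k}. c i \<otimes> x [^] (q ^ (i - 1)))"
  proof -
    have "{1..Suc k} = insert (Suc k) {1..k}" by auto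
    then show ?thesis using Suc.prems x by (simp add: finsum_insert)
  qed
  finally show ?case .
qed

lemma q_pow_inj: "q ^ i = q ^ j \<longleftrightarrow> i = j"
  using q_ge2 by (simp add: power_inject_exp)

lemma lp_coeff0:
  assumes "\<And>i. i \<in> {1..k} \<Longrightarrow> c i \<in> carrier L" and "\<forall>i\<in>{1..k}. d \<noteq> q ^ (i - 1)"
  shows "coeff (lp c k) d = \<zero>"
  using assms
proof (induction k)
  case 0 then show ?case by simp
next
  case (Suc k)
  have cs: "c (Suc k) \<in> carrier L" using Suc.prems by simp
  have ck: "set (lp c k) \<subseteq> carrier L" using Suc.prems lp_carrier by simp
  have "coeff (lp c (Suc k)) d = coeff (monom (c (Suc k)) (q ^ k)) d \<oplus> coeff (lp c k) d"
    using poly_add_coeff[OF monom_in_carrier[OF cs] ck] by simp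
  moreover have "d \<noteq> q ^ k" using Suc.prems(2)[rule_format, of "Suc k"] by auto
  ultimately show ?case using Suc by (simp add: monom_coeff)
qed

lemma lp_coeff:
  assumes "\<And>i. i \<in> {1..k} \<Longrightarrow> c i \<in> carrier L" and j: "j \<in> {1..k}"
  shows "coeff (lp c k) (q ^ (j - 1)) = c j"
  using assms
proof (induction k)
  case 0 then show ?case by simp
next
  case (Suc k)
  have cs: "c (Suc k) \<in> carrier L" using Suc.prems by simp
  have ck: "set (lp c k) \<subseteq> carrier L" using Suc.prems lp_carrier by simp
  have e: "coeff (lp c (Suc k)) (q ^ (j - 1)) = coeff (monom (c (Suc k)) (q ^ k)) (q ^ (j - 1)) \<oplus> coeff (lp c k) (q ^ (j - 1))"
    using poly_add_coeff[OF monom_in_carrier[OF cs] ck] by simp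
  show ?case
  proof (cases "j = Suc k")
    case True
    have "coeff (lp c k) (q ^ k) = \<zero>"
      using Suc.prems by (intro lp_coeff0) (auto simp: q_pow_inj)
    then show ?thesis using e True cs by (simp add: monom_coeff)
  next
    case False
    then have "j \<in> {1..k}" using Suc.prems by auto
    moreover have "q ^ (j - 1) \<noteq> q ^ k" using False Suc.prems by (auto simp: q_pow_inj)
    ultimately show ?thesis using e Suc by (simp add: monom_coeff)
  qed
qed

lemma lp_degree: "degree (lp c k) \<le> q ^ (k - 1)"
proof (induction k)
  case 0 then show ?case by simp
next
  case (Suc k)
  have "degree (lp c (Suc k)) \<le> max (degree (monom (c (Suc k)) (q ^ k))) (degree (lp c k))"
    unfolding lp.simps by (rule poly_add_degree)
  moreover have "degree (monom (c (Suc k)) (q ^ k)) = q ^ k" by (simp add: monom_def)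
  moreover have "q ^ (k - 1) \<le> q ^ k" using q_ge2 by (simp add: power_increasing)
  ultimately show ?case using Suc by simp
qed

lemma lp_poly: "(\<And>i. i \<in> {1..k} \<Longrightarrow> c i \<in> carrier L) \<Longrightarrow> polynomial (carrier L) (lp c k)"
proof (cases k)
  case 0 then show ?thesis by (simp add: polynomial_def)
next
  case (Suc k')
  assume c: "\<And>i. i \<in> {1..k} \<Longrightarrow> c i \<in> carrier L"
  have cs: "c (Suc k') \<in> carrier L" using c Suc by simp
  have ck: "set (lp c k') \<subseteq> carrier L" using c Suc lp_carrier[of k' c] by simp
  show ?thesis unfolding Suc lp.simps
    by (rule poly_add_is_polynomial[OF carrier_is_subring monom_in_carrier[OF cs] ck])
qed

lemma root_bound:
  assumes c: "\<And>i. i \<in> {1..k} \<Longrightarrow> c i \<in> carrier L" and j: "j \<in> {1..k}" "c j \<noteq> \<zero>"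
  shows "card {x \<in> carrier L. (\<Oplus> i\<in>{1..k}. c i \<otimes> x [^] (q ^ (i - 1))) = \<zero>} \<le> q ^ (k - 1)"
proof -
  let ?P = "lp c k"
  have Pc: "set ?P \<subseteq> carrier L" using c lp_carrier by simp
  have Pne: "?P \<noteq> []" using lp_coeff[of k c j, OF c j(1)] j(2) by auto
  have Pcar: "?P \<in> carrier (poly_ring L)"
    using lp_poly[of k c, OF c] univ_poly_carrier by blast
  have "{x \<in> carrier L. (\<Oplus> i\<in>{1..k}. c i \<otimes> x [^] (q ^ (i - 1))) = \<zero>} \<subseteq> set_mset (roots ?P)"
  proof
    fix x assume x: "x \<in> {x \<in> carrier L. (\<Oplus> i\<in>{1..k}. c i \<otimes> x [^] (q ^ (i - 1))) = \<zero>}"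
    then have "is_root ?P x" unfolding is_root_def using lp_eval[of k c x, OF c] Pne by auto
    then show "x \<in> set_mset (roots ?P)" using roots_mem_iff_is_root[OF Pcar] by simp
  qed
  then have "card {x \<in> carrier L. (\<Oplus> i\<in>{1..k}. c i \<otimes> x [^] (q ^ (i - 1))) = \<zero>} \<le> card (set_mset (roots ?P))"
    by (intro card_mono) auto
  also have "\<dots> \<le> size (roots ?P)" by (rule card_set_mset_le_size)
  also have "\<dots> \<le> degree ?P" by (rule size_roots_le_degree[OF Pcar])
  also have "\<dots> \<le> q ^ (k - 1)" by (rule lp_degree)
  finally show ?thesis .
qed

end

context gsetting
begin

definition V :: "nat \<Rightarrow> (nat \<Rightarrow> 'a) set" where
  "V N = {u. (\<forall>j\<in>{1..N}. u j \<in> K) \<and> (\<forall>j. j \<notin> {1..N} \<longrightarrow> u j = \<zero>)}"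

definition lc :: "'a \<Rightarrow> (nat \<Rightarrow> 'a) \<Rightarrow> (nat \<Rightarrow> 'a) \<Rightarrow> nat \<Rightarrow> 'a" where
  "lc \<alpha> y z = (\<lambda>j. \<alpha> \<otimes> y j \<oplus> z j)"

definition subsp :: "nat \<Rightarrow> (nat \<Rightarrow> 'a) set \<Rightarrow> bool" where
  "subsp N W \<longleftrightarrow> W \<subseteq> V N \<and> (\<lambda>_. \<zero>) \<in> W \<and> (\<forall>\<alpha>\<in>K. \<forall>y\<in>W. \<forall>z\<in>W. lc \<alpha> y z \<in> W)"

fun ksp :: "(nat \<Rightarrow> 'a) list \<Rightarrow> (nat \<Rightarrow> 'a) set" where
  "ksp [] = {\<lambda>_. \<zero>}"
| "ksp (y # Y) = {lc \<alpha> y z | \<alpha> z. \<alpha> \<in> K \<and> z \<in> ksp Y}"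

definition dot :: "nat \<Rightarrow> (nat \<Rightarrow> 'a) \<Rightarrow> (nat \<Rightarrow> 'a) \<Rightarrow> 'a" where
  "dot N d z = (\<Oplus> j\<in>{1..N}. d j \<otimes> z j)"

lemma Kc: "x \<in> K \<Longrightarrow> x \<in> carrier L"
  using K_carrier by (rule subsetD)

lemma V_K: "u \<in> V N \<Longrightarrow> u j \<in> K"
  unfolding V_def using K_zero by (cases "j \<in> {1..N}") auto

lemma V_c: "u \<in> V N \<Longrightarrow> u j \<in> carrier L"
  using V_K Kc by blast

lemma zero_V: "(\<lambda>_. \<zero>) \<in> V N"
  unfolding V_def using K_zero by auto

lemma lc_V: "\<alpha> \<in> K \<Longrightarrow> y \<in> V N \<Longrightarrow> z \<in> V N \<Longrightarrow> lc \<alpha> y z \<in> V N"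
  unfolding V_def lc_def using K_add K_mult Kc by auto

lemma ksp_subsp: "set Y \<subseteq> V N \<Longrightarrow> subsp N (ksp Y)"
proof (induction Y)
  case Nil then show ?case unfolding subsp_def using zero_V Kc by (auto simp: lc_def)
next
  case (Cons y Y)
  have yV: "y \<in> V N" using Cons.prems by simp
  have IH: "subsp N (ksp Y)" using Cons by simp
  have sub: "ksp (y # Y) \<subseteq> V N"
    using IH yV lc_V unfolding subsp_def by auto
  have zero: "(\<lambda>_. \<zero>) \<in> ksp (y # Y)"
  proof -
    have "lc \<zero> y (\<lambda>_. \<zero>) = (\<lambda>_. \<zero>)" unfolding lc_def using V_c[OF yV] by auto
    then show ?thesis using IH K_zero unfolding subsp_def by force
  qed
  have cl: "lc \<beta> u w \<in> ksp (y # Y)" if b: "\<beta> \<in> K" and u: "u \<in> ksp (y # Y)" and w: "w \<in> ksp (y # Y)" for \<beta> u w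
  proof -
    obtain a1 z1 where u: "u = lc a1 y z1" "a1 \<in> K" "z1 \<in> ksp Y" using u by auto
    obtain a2 z2 where w: "w = lc a2 y z2" "a2 \<in> K" "z2 \<in> ksp Y" using w by auto
    have z1V: "z1 \<in> V N" and z2V: "z2 \<in> V N" using u w IH unfolding subsp_def by auto
    have "lc \<beta> u w = lc (\<beta> \<otimes> a1 \<oplus> a2) y (lc \<beta> z1 z2)"
    proof
      fix j
      have c: "\<beta> \<in> carrier L" "a1 \<in> carrier L" "a2 \<in> carrier L" "y j \<in> carrier L" "z1 j \<in> carrier L" "z2 j \<in> carrier L"
        using b u w Kc V_c[OF yV] V_c[OF z1V] V_c[OF z2V] by auto
      show "lc \<beta> u w j = lc (\<beta> \<otimes> a1 \<oplus> a2) y (lc \<beta> z1 z2) j"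
        unfolding u w lc_def using c by algebra
    qed
    moreover have "\<beta> \<otimes> a1 \<oplus> a2 \<in> K" using b u w K_add K_mult by auto
    moreover have "lc \<beta> z1 z2 \<in> ksp Y" using IH b u w unfolding subsp_def by auto
    ultimately show ?thesis by auto
  qed
  show ?case unfolding subsp_def using sub zero cl by blast
qed

lemma ksp_sub: "subsp N W \<Longrightarrow> set Y \<subseteq> W \<Longrightarrow> ksp Y \<subseteq> W"
proof (induction Y)
  case Nil then show ?case unfolding subsp_def by auto
next
  case (Cons y Y)
  then show ?case unfolding subsp_def by auto
qed

lemma ksp_mono: assumes "set Y \<subseteq> V N" "x \<in> V N" shows "ksp Y \<subseteq> ksp (x # Y)"
proof
  fix z assume z: "z \<in> ksp Y"
  have "z \<in> V N" using ksp_subsp[OF assms(1)] z unfolding subsp_def by auto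
  then have "lc \<zero> x z = z" unfolding lc_def using V_c[OF assms(2)] V_c by auto
  then show "z \<in> ksp (x # Y)" using z K_zero by force
qed

lemma ksp_self: assumes "set Y \<subseteq> V N" "x \<in> V N" shows "x \<in> ksp (x # Y)"
proof -
  have "(\<lambda>_. \<zero>) \<in> ksp Y" using ksp_subsp[OF assms(1)] unfolding subsp_def by auto
  moreover have "lc \<one> x (\<lambda>_. \<zero>) = x" unfolding lc_def using V_c[OF assms(2)] by auto
  ultimately show ?thesis using K_one by force
qed

lemma ksp_card: assumes Y: "set Y \<subseteq> V N" and x: "x \<in> V N" and nx: "x \<notin> ksp Y"
  shows "card (ksp (x # Y)) = q * card (ksp Y)"
proof -
  have S: "subsp N (ksp Y)" by (rule ksp_subsp[OF Y])
  have img: "ksp (x # Y) = (\<lambda>(\<alpha>, z). lc \<alpha> x z) ` (K \<times> ksp Y)" by auto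
  have inj: "inj_on (\<lambda>(\<alpha>, z). lc \<alpha> x z) (K \<times> ksp Y)"
  proof (rule inj_onI, clarify)
    fix a z b w assume a: "a \<in> K" and z: "z \<in> ksp Y" and b: "b \<in> K" and w: "w \<in> ksp Y"
      and eq: "lc a x z = lc b x w"
    have zV: "z \<in> V N" and wV: "w \<in> V N" using S z w unfolding subsp_def by auto
    have ac: "a \<in> carrier L" "b \<in> carrier L" using a b Kc by auto
    have eqj: "a \<otimes> x j \<oplus> z j = b \<otimes> x j \<oplus> w j" for j
      using eq unfolding lc_def by meson
    show "a = b \<and> z = w"
    proof (cases "a = b")
      case True
      have "z j = w j" for j
        using eqj[of j] True ac V_c[OF x] V_c[OF zV] V_c[OF wV] by (metis add.l_cancel m_closed)
      then show ?thesis using True by auto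
    next
      case False
      define g where "g = inv (a \<ominus> b)"
      have d: "a \<ominus> b \<in> K" using a b K_add K_neg by (simp add: minus_eq)
      have dnz: "a \<ominus> b \<noteq> \<zero>" using False ac by (metis r_right_minus_eq)
      have gK: "g \<in> K" unfolding g_def using K_inv[OF d dnz] .
      have gc: "g \<otimes> (a \<ominus> b) = \<one>" unfolding g_def using dnz d Kc by (simp add: field_Units)
      have "x = lc g w (lc (\<ominus> g) z (\<lambda>_. \<zero>))"
      proof
        fix j
        have c: "x j \<in> carrier L" "z j \<in> carrier L" "w j \<in> carrier L" "g \<in> carrier L"
          using V_c[OF x] V_c[OF zV] V_c[OF wV] gK Kc by auto
        have "(a \<ominus> b) \<otimes> x j = (a \<otimes> x j \<oplus> z j) \<ominus> z j \<ominus> b \<otimes> x j" using c ac by algebra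
        also have "\<dots> = (b \<otimes> x j \<oplus> w j) \<ominus> z j \<ominus> b \<otimes> x j" using eqj[of j] by simp
        also have "\<dots> = w j \<ominus> z j" using c ac by algebra
        finally have "(a \<ominus> b) \<otimes> x j = w j \<ominus> z j" .
        then have "g \<otimes> ((a \<ominus> b) \<otimes> x j) = g \<otimes> (w j \<ominus> z j)" by simp
        then have "x j = g \<otimes> (w j \<ominus> z j)"
          using gc c ac by (metis l_one m_assoc minus_closed)
        then show "x j = lc g w (lc (\<ominus> g) z (\<lambda>_. \<zero>)) j"
          unfolding lc_def using c by algebra
      qed
      moreover have "lc g w (lc (\<ominus> g) z (\<lambda>_. \<zero>)) \<in> ksp Y"
        using S gK K_neg z w unfolding subsp_def by auto
      ultimately show ?thesis using nx by simp
    qed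
  qed
  have "card (ksp (x # Y)) = card (K \<times> ksp Y)" unfolding img using inj by (rule card_image)
  then show ?thesis using K_card by (simp add: card_cartesian_product)
qed

end

context gsetting
begin

lemma greedy:
  assumes "finite Xs" "Xs \<subseteq> W" "subsp N W"
  shows "\<exists>Y. set Y \<subseteq> W \<and> Xs \<subseteq> ksp Y \<and> card (ksp Y) = q ^ length Y"
  using assms
proof (induction Xs rule: finite_induct)
  case empty
  show ?case by (rule exI[of _ "[]"]) simp
next
  case (insert x Xs)
  then obtain Y where Y: "set Y \<subseteq> W" "Xs \<subseteq> ksp Y" "card (ksp Y) = q ^ length Y" by auto
  have WV: "W \<subseteq> V N" using insert.prems unfolding subsp_def by auto
  have YV: "set Y \<subseteq> V N" using Y WV by auto
  have xW: "x \<in> W" using insert.prems by auto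
  have xV: "x \<in> V N" using xW WV by auto
  show ?case
  proof (cases "x \<in> ksp Y")
    case True then show ?thesis using Y by auto
  next
    case False
    have "card (ksp (x # Y)) = q ^ length (x # Y)"
      using ksp_card[OF YV xV False] Y by simp
    moreover have "insert x Xs \<subseteq> ksp (x # Y)"
      using ksp_self[OF YV xV] ksp_mono[OF YV xV] Y by auto
    moreover have "set (x # Y) \<subseteq> W" using Y xW by auto
    ultimately show ?thesis by blast
  qed
qed

lemma dot_lc: assumes d: "d \<in> V N" and a: "\<alpha> \<in> K" and y: "y \<in> V N" and z: "z \<in> V N"
  shows "dot N d (lc \<alpha> y z) = \<alpha> \<otimes> dot N d y \<oplus> dot N d z"
proof -
  have ac: "\<alpha> \<in> carrier L" using a Kc by auto
  have "dot N d (lc \<alpha> y z) = (\<Oplus> j\<in>{1..N}. \<alpha> \<otimes> (d j \<otimes> y j) \<oplus> d j \<otimes> z j)"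
    unfolding dot_def lc_def
  proof (intro finsum_cong')
    fix j show "d j \<otimes> (\<alpha> \<otimes> y j \<oplus> z j) = \<alpha> \<otimes> (d j \<otimes> y j) \<oplus> d j \<otimes> z j"
      using ac V_c[OF d] V_c[OF y] V_c[OF z] by algebra
  qed (use ac V_c[OF d] V_c[OF y] V_c[OF z] in auto)
  also have "\<dots> = (\<Oplus> j\<in>{1..N}. \<alpha> \<otimes> (d j \<otimes> y j)) \<oplus> (\<Oplus> j\<in>{1..N}. d j \<otimes> z j)"
    using ac V_c[OF d] V_c[OF y] V_c[OF z] by (intro finsum_addf) auto
  also have "(\<Oplus> j\<in>{1..N}. \<alpha> \<otimes> (d j \<otimes> y j)) = \<alpha> \<otimes> (\<Oplus> j\<in>{1..N}. d j \<otimes> y j)"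
    using ac V_c[OF d] V_c[OF y] by (intro finsum_rdistr[symmetric]) auto
  finally show ?thesis unfolding dot_def .
qed

lemma dot_zero: "d \<in> V N \<Longrightarrow> dot N d (\<lambda>_. \<zero>) = \<zero>"
  unfolding dot_def using V_c by (simp add: finsum_zero)

lemma dot_ksp:
  assumes d: "d \<in> V N" and Y: "set Y \<subseteq> V N" and o: "\<forall>y\<in>set Y. dot N d y = \<zero>"
  shows "\<forall>z\<in>ksp Y. dot N d z = \<zero>"
  using Y o
proof (induction Y)
  case Nil then show ?case using dot_zero[OF d] by simp
next
  case (Cons y Y)
  have S: "subsp N (ksp Y)" using ksp_subsp Cons.prems by simp
  show ?case
  proof
    fix z assume "z \<in> ksp (y # Y)"
    then obtain \<alpha> w where z: "z = lc \<alpha> y w" "\<alpha> \<in> K" "w \<in> ksp Y" by auto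
    have wV: "w \<in> V N" using S z unfolding subsp_def by auto
    have "dot N d z = \<alpha> \<otimes> dot N d y \<oplus> dot N d w"
      unfolding z using dot_lc[OF d z(2) _ wV] Cons.prems by simp
    then show "dot N d z = \<zero>" using Cons z Kc by auto
  qed
qed

lemma V_finite: "finite (V N)"
proof -
  have "V N \<subseteq> (\<lambda>f. \<lambda>j. if j \<in> {1..N} then f j else \<zero>) ` (PiE {1..N} (\<lambda>_. K))"
  proof
    fix u assume u: "u \<in> V N"
    let ?f = "restrict u {1..N}"
    have "?f \<in> PiE {1..N} (\<lambda>_. K)" using u unfolding V_def by auto
    moreover have "u = (\<lambda>j. if j \<in> {1..N} then ?f j else \<zero>)" using u unfolding V_def by auto
    ultimately show "u \<in> (\<lambda>f. \<lambda>j. if j \<in> {1..N} then f j else \<zero>) ` (PiE {1..N} (\<lambda>_. K))" by blast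
  qed
  moreover have "finite (PiE {1..N} (\<lambda>_. K))" using K_fin by (intro finite_PiE) auto
  ultimately show ?thesis using finite_subset by blast
qed

lemma V_card: "q ^ N \<le> card (V N)"
proof -
  let ?A = "{xs. set xs \<subseteq> K \<and> length xs = N}"
  let ?f = "\<lambda>xs. \<lambda>j. if j \<in> {1..N} then xs ! (j - 1) else \<zero>"
  have "card ?A = q ^ N" using card_lists_length_eq[OF K_fin] K_card by simp
  moreover have "card ?A \<le> card (V N)"
  proof (rule card_inj_on_le)
    show "inj_on ?f ?A"
    proof (rule inj_onI)
      fix xs ys assume xs: "xs \<in> ?A" and ys: "ys \<in> ?A" and eq: "?f xs = ?f ys"
      have "xs ! i = ys ! i" if "i < N" for i
      proof -
        have "?f xs (Suc i) = ?f ys (Suc i)" by (rule fun_cong[OF eq])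
        then show ?thesis using that by simp
      qed
      then show "xs = ys" using xs ys by (auto intro: nth_equalityI)
    qed
    show "?f ` ?A \<subseteq> V N"
    proof
      fix u assume "u \<in> ?f ` ?A"
      then obtain xs where xs: "xs \<in> ?A" "u = ?f xs" by auto
      have "xs ! (j - 1) \<in> K" if "j \<in> {1..N}" for j
        using xs(1) that by (auto intro!: subsetD[of "set xs" K] nth_mem)
      then show "u \<in> V N" unfolding V_def xs(2) by auto
    qed
    show "finite (V N)" by (rule V_finite)
  qed
  ultimately show ?thesis by simp
qed

lemma pigeon:
  assumes Z: "set Z \<subseteq> V N" and len: "length Z < N"
  shows "\<exists>e\<in>V N. e \<noteq> (\<lambda>_. \<zero>) \<and> (\<forall>z\<in>set Z. dot N e z = \<zero>)"
proof -
  let ?D = "\<lambda>d. map (dot N d) Z"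
  let ?B = "{xs. set xs \<subseteq> K \<and> length xs = length Z}"
  have DB: "?D ` V N \<subseteq> ?B"
  proof
    fix xs assume "xs \<in> ?D ` V N"
    then obtain d where d: "d \<in> V N" "xs = ?D d" by auto
    have "dot N d z \<in> K" if "z \<in> V N" for z
    proof -
      have "finsum L (\<lambda>j. d j \<otimes> z j) A \<in> K" if "finite A" for A :: "nat set"
        using that
      proof (induction A rule: finite_induct)
        case empty then show ?case using K_zero by simp
        case (insert a A)
        have "d a \<otimes> z a \<in> K" using V_K[OF d(1)] V_K[OF \<open>z \<in> V N\<close>] K_mult by auto
        then show ?case using insert V_c[OF d(1)] V_c[OF \<open>z \<in> V N\<close>] K_add
          by (subst finsum_insert) auto
      qed
      then show ?thesis unfolding dot_def by simp
    qed
    then show "xs \<in> ?B" using d Z by auto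
  qed
  have "\<not> inj_on ?D (V N)"
  proof
    assume inj: "inj_on ?D (V N)"
    have "card (V N) \<le> card ?B"
      using card_inj_on_le[OF inj DB] card_lists_length_eq[OF K_fin] K_fin by (simp add: finite_lists_length_eq)
    also have "\<dots> = q ^ length Z" using card_lists_length_eq[OF K_fin] K_card by simp
    also have "\<dots> < q ^ N" using len q_ge2 by (simp add: power_strict_increasing)
    finally show False using V_card[of N] by linarith
  qed
  then obtain d d' where dd: "d \<in> V N" "d' \<in> V N" "d \<noteq> d'" "?D d = ?D d'"
    unfolding inj_on_def by blast
  define e where "e = lc (\<ominus> \<one>) d' d"
  have eV: "e \<in> V N" unfolding e_def using lc_V[OF _ dd(2) dd(1)] K_neg K_one by auto
  have "e \<noteq> (\<lambda>_. \<zero>)"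
  proof
    assume "e = (\<lambda>_. \<zero>)"
    then have "d j = d' j" for j
    proof -
      assume "e = (\<lambda>_. \<zero>)"
      then have "\<ominus> \<one> \<otimes> d' j \<oplus> d j = \<zero>" unfolding e_def lc_def by meson
      then show ?thesis using V_c[OF dd(1)] V_c[OF dd(2)]
        by (metis l_minus one_closed l_one minus_equality add.m_comm minus_minus m_closed a_inv_closed)
    qed
    then show False using dd(3) by auto
  qed
  moreover have "dot N e z = \<zero>" if z: "z \<in> set Z" for z
  proof -
    have zV: "z \<in> V N" using z Z by auto
    have "e = lc (\<ominus> \<one>) d' d" by (simp add: e_def)
    have "dot N d z = dot N d' z" using dd(4) z by auto
    moreover have "dot N e z = \<ominus> \<one> \<otimes> dot N d' z \<oplus> dot N d z"
    proof -
      have "dot N e z = (\<Oplus> j\<in>{1..N}. (\<ominus> \<one>) \<otimes> (z j \<otimes> d' j) \<oplus> z j \<otimes> d j)"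
        unfolding dot_def e_def lc_def
      proof (intro finsum_cong')
        fix j show "(\<ominus> \<one> \<otimes> d' j \<oplus> d j) \<otimes> z j = (\<ominus> \<one>) \<otimes> (z j \<otimes> d' j) \<oplus> z j \<otimes> d j"
          using V_c[OF dd(1)] V_c[OF dd(2)] V_c[OF zV] by algebra
      qed (use V_c[OF dd(1)] V_c[OF dd(2)] V_c[OF zV] in auto)
      also have "\<dots> = dot N z (lc (\<ominus> \<one>) d' d)" unfolding dot_def lc_def
      proof (intro finsum_cong')
        fix j show "(\<ominus> \<one>) \<otimes> (z j \<otimes> d' j) \<oplus> z j \<otimes> d j = z j \<otimes> (\<ominus> \<one> \<otimes> d' j \<oplus> d j)"
          using V_c[OF dd(1)] V_c[OF dd(2)] V_c[OF zV] by algebra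
      qed (use V_c[OF dd(1)] V_c[OF dd(2)] V_c[OF zV] in auto)
      also have "\<dots> = \<ominus> \<one> \<otimes> dot N z d' \<oplus> dot N z d"
        by (rule dot_lc[OF zV _ dd(2) dd(1)]) (use K_neg K_one in auto)
      also have "dot N z d' = dot N d' z" unfolding dot_def
        using V_c[OF dd(2)] V_c[OF zV] by (intro finsum_cong') (auto simp: m_comm)
      also have "dot N z d = dot N d z" unfolding dot_def
        using V_c[OF dd(1)] V_c[OF zV] by (intro finsum_cong') (auto simp: m_comm)
      finally show ?thesis .
    qed
    moreover have "dot N d' z \<in> carrier L" unfolding dot_def
      using V_c[OF dd(2)] V_c[OF zV] by (simp add: finsum_closed)
    ultimately show ?thesis by (simp add: l_minus l_neg)
  qed
  ultimately show ?thesis using eV by blast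
qed

end

context gsetting
begin

definition ff :: "(nat \<Rightarrow> 'a) \<Rightarrow> nat \<Rightarrow> 'a \<Rightarrow> 'a" where
  "ff c k x = (\<Oplus> i\<in>{1..k}. c i \<otimes> x [^] (q ^ (i - 1)))"

definition Phi :: "nat \<Rightarrow> (nat \<Rightarrow> 'a) \<Rightarrow> (nat \<Rightarrow> 'a) \<Rightarrow> 'a" where
  "Phi N g u = (\<Oplus> j\<in>{1..N}. u j \<otimes> g j)"

lemma frob_sum:
  assumes "finite A" "\<forall>j\<in>A. u j \<in> K" "\<forall>j\<in>A. g j \<in> carrier L"
  shows "(\<Oplus> j\<in>A. u j \<otimes> g j) [^] (q ^ e) = (\<Oplus> j\<in>A. u j \<otimes> g j [^] (q ^ e))"
  using assms
proof (induction A rule: finite_induct)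
  case empty
  have "q ^ e \<noteq> 0" using q_ge2 by simp
  then show ?case by (simp add: nat_pow_zero)
next
  case (insert a A)
  have ua: "u a \<in> K" "u a \<in> carrier L" "g a \<in> carrier L" using insert.prems Kc by auto
  have cl: "\<forall>j\<in>A. u j \<in> carrier L" using insert.prems Kc by auto
  have "(\<Oplus> j\<in>insert a A. u j \<otimes> g j) = u a \<otimes> g a \<oplus> (\<Oplus> j\<in>A. u j \<otimes> g j)"
    using insert ua cl by (subst finsum_insert) auto
  moreover have "(\<Oplus> j\<in>insert a A. u j \<otimes> g j [^] (q ^ e)) = u a \<otimes> g a [^] (q ^ e) \<oplus> (\<Oplus> j\<in>A. u j \<otimes> g j [^] (q ^ e))"
    using insert ua cl by (subst finsum_insert) auto
  moreover have "(u a \<otimes> g a \<oplus> (\<Oplus> j\<in>A. u j \<otimes> g j)) [^] (q ^ e) = (u a \<otimes> g a) [^] (q ^ e) \<oplus> (\<Oplus> j\<in>A. u j \<otimes> g j) [^] (q ^ e)"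
    using ua cl insert.prems by (intro frob_add) (auto intro: finsum_closed)
  moreover have "(u a \<otimes> g a) [^] (q ^ e) = u a \<otimes> g a [^] (q ^ e)" using ua by (intro frob_smult) auto
  ultimately show ?case using insert by simp
qed

lemma ff_closed: "\<forall>i\<in>{1..k}. c i \<in> carrier L \<Longrightarrow> x \<in> carrier L \<Longrightarrow> ff c k x \<in> carrier L"
  unfolding ff_def by (auto intro: finsum_closed)

lemma ff_lin:
  assumes c: "\<forall>i\<in>{1..k}. c i \<in> carrier L" and a: "\<alpha> \<in> K" and x: "x \<in> carrier L" and y: "y \<in> carrier L"
  shows "ff c k (\<alpha> \<otimes> x \<oplus> y) = \<alpha> \<otimes> ff c k x \<oplus> ff c k y"
proof -
  have ac: "\<alpha> \<in> carrier L" using a Kc by auto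
  have "ff c k (\<alpha> \<otimes> x \<oplus> y) = (\<Oplus> i\<in>{1..k}. \<alpha> \<otimes> (c i \<otimes> x [^] (q ^ (i - 1))) \<oplus> c i \<otimes> y [^] (q ^ (i - 1)))"
    unfolding ff_def
  proof (intro finsum_cong')
    fix i assume i: "i \<in> {1..k}"
    have "(\<alpha> \<otimes> x \<oplus> y) [^] (q ^ (i - 1)) = (\<alpha> \<otimes> x) [^] (q ^ (i - 1)) \<oplus> y [^] (q ^ (i - 1))"
      using ac x y by (intro frob_add) auto
    also have "(\<alpha> \<otimes> x) [^] (q ^ (i - 1)) = \<alpha> \<otimes> x [^] (q ^ (i - 1))" using a x by (rule frob_smult)
    finally have e: "(\<alpha> \<otimes> x \<oplus> y) [^] (q ^ (i - 1)) = \<alpha> \<otimes> x [^] (q ^ (i - 1)) \<oplus> y [^] (q ^ (i - 1))" .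
    have ci: "c i \<in> carrier L" using c i by auto
    have X1: "x [^] (q ^ (i - 1)) \<in> carrier L" "y [^] (q ^ (i - 1)) \<in> carrier L" using x y by auto
    show "c i \<otimes> (\<alpha> \<otimes> x \<oplus> y) [^] (q ^ (i - 1)) = \<alpha> \<otimes> (c i \<otimes> x [^] (q ^ (i - 1))) \<oplus> c i \<otimes> y [^] (q ^ (i - 1))"
      unfolding e using ci X1 ac by algebra
  qed (use c ac x y in auto)
  also have "\<dots> = (\<Oplus> i\<in>{1..k}. \<alpha> \<otimes> (c i \<otimes> x [^] (q ^ (i - 1)))) \<oplus> (\<Oplus> i\<in>{1..k}. c i \<otimes> y [^] (q ^ (i - 1)))"
    using c ac x y by (intro finsum_addf) auto
  also have "(\<Oplus> i\<in>{1..k}. \<alpha> \<otimes> (c i \<otimes> x [^] (q ^ (i - 1)))) = \<alpha> \<otimes> ff c k x"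
    unfolding ff_def using c ac x by (intro finsum_rdistr[symmetric]) auto
  finally show ?thesis unfolding ff_def .
qed

lemma Phi_closed: "\<forall>j\<in>{1..N}. g j \<in> carrier L \<Longrightarrow> u \<in> V N \<Longrightarrow> Phi N g u \<in> carrier L"
  unfolding Phi_def using V_c by (auto intro: finsum_closed)

lemma Phi_lc:
  assumes g: "\<forall>j\<in>{1..N}. g j \<in> carrier L" and a: "\<alpha> \<in> K" and y: "y \<in> V N" and z: "z \<in> V N"
  shows "Phi N g (lc \<alpha> y z) = \<alpha> \<otimes> Phi N g y \<oplus> Phi N g z"
proof -
  have ac: "\<alpha> \<in> carrier L" using a Kc by auto
  have "Phi N g (lc \<alpha> y z) = (\<Oplus> j\<in>{1..N}. \<alpha> \<otimes> (y j \<otimes> g j) \<oplus> z j \<otimes> g j)"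
    unfolding Phi_def lc_def
  proof (intro finsum_cong')
    fix j assume "j \<in> {1..N}"
    then have gj: "g j \<in> carrier L" using g by auto
    show "(\<alpha> \<otimes> y j \<oplus> z j) \<otimes> g j = \<alpha> \<otimes> (y j \<otimes> g j) \<oplus> z j \<otimes> g j"
      using gj ac V_c[OF y, of j] V_c[OF z, of j] by algebra
  qed (use g ac V_c[OF y] V_c[OF z] in auto)
  also have "\<dots> = (\<Oplus> j\<in>{1..N}. \<alpha> \<otimes> (y j \<otimes> g j)) \<oplus> (\<Oplus> j\<in>{1..N}. z j \<otimes> g j)"
    using g ac V_c[OF y] V_c[OF z] by (intro finsum_addf) auto
  also have "(\<Oplus> j\<in>{1..N}. \<alpha> \<otimes> (y j \<otimes> g j)) = \<alpha> \<otimes> Phi N g y"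
    unfolding Phi_def using g ac V_c[OF y] by (intro finsum_rdistr[symmetric]) auto
  finally show ?thesis unfolding Phi_def .
qed

lemma Phi_inj:
  assumes g: "\<forall>j\<in>{1..N}. g j \<in> carrier L"
    and gi: "\<forall>u. (\<forall>j\<in>{1..N}. u j \<in> K) \<longrightarrow> (\<Oplus> j\<in>{1..N}. u j \<otimes> g j) = \<zero> \<longrightarrow> (\<forall>j\<in>{1..N}. u j = \<zero>)"
  shows "inj_on (Phi N g) (V N)"
proof (rule inj_onI)
  fix u u' assume u: "u \<in> V N" and u': "u' \<in> V N" and eq: "Phi N g u = Phi N g u'"
  let ?w = "lc (\<ominus> \<one>) u' u"
  have wV: "?w \<in> V N" using lc_V[OF _ u' u] K_neg K_one by auto
  have "Phi N g ?w = \<ominus> \<one> \<otimes> Phi N g u' \<oplus> Phi N g u"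
    using Phi_lc[OF g _ u' u] K_neg K_one by auto
  also have "\<dots> = \<zero>" using eq Phi_closed[OF g u] by (simp add: l_minus l_neg)
  finally have "\<forall>j\<in>{1..N}. ?w j = \<zero>" using gi wV unfolding Phi_def V_def by blast
  then have "u j = u' j" if "j \<in> {1..N}" for j
  proof -
    have "\<ominus> \<one> \<otimes> u' j \<oplus> u j = \<zero>" using that \<open>\<forall>j\<in>{1..N}. ?w j = \<zero>\<close> unfolding lc_def by auto
    then show ?thesis using V_c[OF u] V_c[OF u']
      by (metis l_minus one_closed l_one minus_equality add.m_comm minus_minus m_closed a_inv_closed)
  qed
  moreover have "u j = u' j" if "j \<notin> {1..N}" for j using u u' that unfolding V_def by auto
  ultimately show "u = u'" by blast
qed

end

context gsetting
begin

lemma core: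
  fixes G :: "nat \<Rightarrow> 'p \<Rightarrow> 'a" and T Is :: "'p set"
  assumes g: "\<forall>j\<in>{1..N}. g j \<in> carrier L"
    and gi: "\<forall>u. (\<forall>j\<in>{1..N}. u j \<in> K) \<longrightarrow> (\<Oplus> j\<in>{1..N}. u j \<otimes> g j) = \<zero> \<longrightarrow> (\<forall>j\<in>{1..N}. u j = \<zero>)"
    and GK: "\<forall>j\<in>{1..N}. \<forall>p\<in>T. G j p \<in> K"
    and oc: "\<forall>d. (\<forall>j\<in>{1..N}. d j \<in> K) \<longrightarrow> (\<forall>p\<in>T. (\<Oplus> j\<in>{1..N}. d j \<otimes> G j p) = \<zero>) \<longrightarrow> (\<forall>j\<in>{1..N}. d j = \<zero>)"
    and T: "finite T" and Is: "Is \<subseteq> T" "card Is = h"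
    and c: "\<forall>i\<in>{1..N - h}. c i \<in> carrier L"
    and van: "\<forall>p\<in>T - Is. (\<Oplus> i\<in>{1..N - h}. c i \<otimes> (\<Oplus> j\<in>{1..N}. g j [^] (q ^ (i - 1)) \<otimes> G j p)) = \<zero>"
  shows "\<forall>i\<in>{1..N - h}. c i = \<zero>"
proof (rule ccontr)
  define k where "k = N - h"
  assume "\<not> (\<forall>i\<in>{1..N - h}. c i = \<zero>)"
  then obtain i0 where i0: "i0 \<in> {1..k}" "c i0 \<noteq> \<zero>" unfolding k_def by auto
  have c': "\<forall>i\<in>{1..k}. c i \<in> carrier L" using c unfolding k_def .
  define col where "col p = (\<lambda>j. if j \<in> {1..N} then G j p else \<zero>)" for p
  have colV: "col p \<in> V N" if "p \<in> T" for p
    using GK that unfolding V_def col_def by auto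
  have key1: "(\<Oplus> i\<in>{1..k}. c i \<otimes> (\<Oplus> j\<in>{1..N}. g j [^] (q ^ (i - 1)) \<otimes> G j p)) = ff c k (Phi N g (col p))"
    if p: "p \<in> T" for p
    unfolding ff_def Phi_def
  proof (intro finsum_cong')
    fix i assume i: "i \<in> {1..k}"
    have "(\<Oplus> j\<in>{1..N}. col p j \<otimes> g j) [^] (q ^ (i - 1)) = (\<Oplus> j\<in>{1..N}. col p j \<otimes> g j [^] (q ^ (i - 1)))"
      using colV[OF p] g by (intro frob_sum) (auto intro: V_K)
    also have "\<dots> = (\<Oplus> j\<in>{1..N}. g j [^] (q ^ (i - 1)) \<otimes> G j p)"
    proof (intro finsum_cong')
      fix j assume j: "j \<in> {1..N}"
      then have "G j p \<in> carrier L" using GK p Kc by auto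
      then show "col p j \<otimes> g j [^] (q ^ (i - 1)) = g j [^] (q ^ (i - 1)) \<otimes> G j p"
        using j g unfolding col_def by (auto simp: m_comm)
    qed (use g GK p Kc in auto)
    finally show "c i \<otimes> (\<Oplus> j\<in>{1..N}. g j [^] (q ^ (i - 1)) \<otimes> G j p) = c i \<otimes> (\<Oplus> j\<in>{1..N}. col p j \<otimes> g j) [^] (q ^ (i - 1))"
      by simp
  qed (use c' g GK p Kc V_c[OF colV[OF p]] in \<open>auto intro!: finsum_closed\<close>)
  define U where "U = {u \<in> V N. ff c k (Phi N g u) = \<zero>}"
  have Usub: "subsp N U"
    unfolding subsp_def
  proof (intro conjI ballI)
    show "U \<subseteq> V N" unfolding U_def by auto
    have "Phi N g (\<lambda>_. \<zero>) = (\<Oplus> j\<in>{1..N}. \<zero>)" unfolding Phi_def using g by (intro finsum_cong') auto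
    then have "Phi N g (\<lambda>_. \<zero>) = \<zero>" by simp
    moreover have "ff c k \<zero> = \<zero>"
    proof -
      have "ff c k \<zero> = (\<Oplus> i\<in>{1..k}. \<zero>)" unfolding ff_def
      proof (intro finsum_cong')
        fix i assume "i \<in> {1..k}"
        moreover have "q ^ (i - 1) \<noteq> 0" using q_ge2 by simp
        ultimately show "c i \<otimes> \<zero> [^] (q ^ (i - 1)) = \<zero>" using c' by (simp add: nat_pow_zero)
      qed auto
      then show ?thesis by simp
    qed
    ultimately show "(\<lambda>_. \<zero>) \<in> U" unfolding U_def using zero_V by simp
  next
    fix \<alpha> y z assume a: "\<alpha> \<in> K" and y: "y \<in> U" and z: "z \<in> U"
    have yV: "y \<in> V N" and zV: "z \<in> V N" using y z unfolding U_def by auto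
    have "ff c k (Phi N g (lc \<alpha> y z)) = ff c k (\<alpha> \<otimes> Phi N g y \<oplus> Phi N g z)"
      using Phi_lc[OF g a yV zV] by simp
    also have "\<dots> = \<alpha> \<otimes> ff c k (Phi N g y) \<oplus> ff c k (Phi N g z)"
      by (rule ff_lin[OF c' a Phi_closed[OF g yV] Phi_closed[OF g zV]])
    also have "\<dots> = \<zero>" using y z a Kc unfolding U_def by auto
    finally show "lc \<alpha> y z \<in> U" unfolding U_def using lc_V[OF a yV zV] by simp
  qed
  have UV: "U \<subseteq> V N" using Usub unfolding subsp_def by auto
  have Ufin: "finite U" using V_finite finite_subset UV by blast
  have cardU: "card U \<le> q ^ (k - 1)"
  proof -
    have "card U = card (Phi N g ` U)"
      using Phi_inj[OF g gi] UV by (intro card_image[symmetric]) (rule inj_on_subset)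
    also have "\<dots> \<le> card {x \<in> carrier L. ff c k x = \<zero>}"
    proof (rule card_mono)
      show "finite {x \<in> carrier L. ff c k x = \<zero>}" using L_fin by simp
      show "Phi N g ` U \<subseteq> {x \<in> carrier L. ff c k x = \<zero>}"
        using Phi_closed[OF g] UV unfolding U_def by auto
    qed
    also have "\<dots> \<le> q ^ (k - 1)"
      unfolding ff_def using root_bound[of k c i0] c' i0 by auto
    finally show ?thesis .
  qed
  let ?Xs = "col ` (T - Is)"
  have XsU: "?Xs \<subseteq> U"
  proof
    fix u assume "u \<in> ?Xs"
    then obtain p where p: "p \<in> T - Is" "u = col p" by auto
    have "ff c k (Phi N g (col p)) = \<zero>" using key1[of p] van p unfolding k_def by auto
    then show "u \<in> U" unfolding U_def using p colV by auto
  qed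
  obtain Y where Y: "set Y \<subseteq> U" "?Xs \<subseteq> ksp Y" "card (ksp Y) = q ^ length Y"
    using greedy[OF _ XsU Usub] T by auto
  have YV: "set Y \<subseteq> V N" using Y UV by auto
  have "q ^ length Y \<le> q ^ (k - 1)"
  proof -
    have "card (ksp Y) \<le> card U" using ksp_sub[OF Usub Y(1)] Ufin by (rule card_mono[rotated])
    then show ?thesis using Y(3) cardU by simp
  qed
  then have lenY: "length Y \<le> k - 1" using q_ge2 by (simp add: power_le_imp_le_exp)
  have k1: "k \<ge> 1" using i0 by auto
  have Isfin: "finite Is" using T Is finite_subset by blast
  obtain Il where Il: "set Il = Is" "distinct Il" using finite_distinct_list[OF Isfin] by blast
  have lenIl: "length Il = h" using Il Is distinct_card by metis
  define Z where "Z = Y @ map col Il"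
  have ZV: "set Z \<subseteq> V N" unfolding Z_def using YV Il Is colV by auto
  have lenZ: "length Z < N" unfolding Z_def using lenY lenIl k1 unfolding k_def by auto
  obtain e where e: "e \<in> V N" "e \<noteq> (\<lambda>_. \<zero>)" "\<forall>z\<in>set Z. dot N e z = \<zero>"
    using pigeon[OF ZV lenZ] by blast
  have dY: "\<forall>z\<in>ksp Y. dot N e z = \<zero>"
    using dot_ksp[OF e(1) YV] e(3) unfolding Z_def by auto
  have eK: "\<forall>j\<in>{1..N}. e j \<in> K" using e(1) V_K by blast
  have eT: "\<forall>p\<in>T. (\<Oplus> j\<in>{1..N}. e j \<otimes> G j p) = \<zero>"
  proof
    fix p assume p: "p \<in> T"
    have "dot N e (col p) = \<zero>"
    proof (cases "p \<in> Is")
      case True then show ?thesis using e(3) Il unfolding Z_def by auto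
    next
      case False then show ?thesis using dY Y(2) p by auto
    qed
    moreover have "dot N e (col p) = (\<Oplus> j\<in>{1..N}. e j \<otimes> G j p)"
      unfolding dot_def col_def using V_c[OF e(1)] GK p Kc by (intro finsum_cong') auto
    ultimately show "(\<Oplus> j\<in>{1..N}. e j \<otimes> G j p) = \<zero>" by simp
  qed
  have "\<forall>j\<in>{1..N}. e j = \<zero>" using spec[OF oc, of e] eK eT by blast
  then have "e j = \<zero>" for j using e(1) unfolding V_def by (cases "j \<in> {1..N}") auto
  then have "e = (\<lambda>_. \<zero>)" by (rule ext)
  then show False using e(2) by simp
qed

end

context gsetting
begin

lemma finsum_K:
  assumes "finite A" "\<forall>j\<in>A. f j \<in> K"
  shows "finsum (L\<lparr>carrier := K\<rparr>) f A = finsum L f A"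
  using assms
proof (induction A rule: finite_induct)
  case empty
  interpret K': field "L\<lparr>carrier := K\<rparr>" by (rule K_field)
  show ?case using K'.finsum_empty by simp
next
  case (insert a A)
  interpret K': field "L\<lparr>carrier := K\<rparr>" by (rule K_field)
  have "finsum (L\<lparr>carrier := K\<rparr>) f (insert a A) = f a \<oplus>\<^bsub>L\<lparr>carrier := K\<rparr>\<^esub> finsum (L\<lparr>carrier := K\<rparr>) f A"
    using insert by (intro K'.finsum_insert) auto
  moreover have "finsum L f (insert a A) = f a \<oplus> finsum L f A"
    using insert Kc by (intro finsum_insert) auto
  ultimately show ?case using insert by simp
qed

lemma main:
  fixes m n a b h :: nat
    and Cout :: "(nat \<times> nat \<Rightarrow> 'a) set"
    and Gout :: "nat \<Rightarrow> nat \<times> nat \<Rightarrow> 'a"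
    and g :: "nat \<Rightarrow> 'a"
  assumes ma: "m > a" and nb: "n > b"
    and h_le: "h \<le> (m - a) * (n - b) - max (m - a) (n - b)"
    and Gout_K: "\<forall>i\<in>{1..(m - a) * (n - b)}. \<forall>p\<in>grid m n. Gout i p \<in> K"
    and Gout_indep: "lin_indep_rows (L\<lparr>carrier := K\<rparr>) (grid m n) {1..(m - a) * (n - b)} Gout"
    and Cout_def: "Cout = span_rows (L\<lparr>carrier := K\<rparr>) (grid m n) {1..(m - a) * (n - b)} Gout"
    and Cout_MR: "MR_code (L\<lparr>carrier := K\<rparr>) m n a b 0 Cout"
    and g_L: "\<forall>j\<in>{1..(m - a) * (n - b)}. g j \<in> carrier L"
    and g_indep: "\<forall>c. (\<forall>j\<in>{1..(m - a) * (n - b)}. c j \<in> K) \<longrightarrow>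
        (\<Oplus>\<^bsub>L\<^esub> j\<in>{1..(m - a) * (n - b)}. c j \<otimes>\<^bsub>L\<^esub> g j) = \<zero>\<^bsub>L\<^esub> \<longrightarrow>
        (\<forall>j\<in>{1..(m - a) * (n - b)}. c j = \<zero>\<^bsub>L\<^esub>)"
  shows "\<forall>E' I. max_correctable m n a b 0 E' \<longrightarrow> I \<subseteq> grid m n - E' \<longrightarrow> card I = h \<longrightarrow>
     corrects m n
       (span_rows L (grid m n) {1..(m - a) * (n - b) - h}
          (mat_mult L {1..(m - a) * (n - b)} (gab_gen L q g) Gout))
       (E' \<union> I)"
proof (intro allI impI)
  fix E' I :: "(nat \<times> nat) set"
  assume mc: "max_correctable m n a b 0 E'" and I: "I \<subseteq> grid m n - E'" and cI: "card I = h"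
  define N where "N = (m - a) * (n - b)"
  define T where "T = grid m n - E'"
  define K' where "K' = L\<lparr>carrier := K\<rparr>"
  have gridfin: "finite (grid m n)" unfolding grid_def by simp
  have Tfin: "finite T" unfolding T_def using gridfin by simp
  have "correctable m n a b 0 E'" using mc unfolding max_correctable_def by (rule conjunct1)
  then have corrE: "corrects m n Cout E'"
    using Cout_MR unfolding MR_code_def by simp
  have oc: "\<forall>d. (\<forall>j\<in>{1..N}. d j \<in> K) \<longrightarrow> (\<forall>p\<in>T. (\<Oplus> j\<in>{1..N}. d j \<otimes> Gout j p) = \<zero>) \<longrightarrow> (\<forall>j\<in>{1..N}. d j = \<zero>)"
  proof (intro allI impI)
    fix d assume dK: "\<forall>j\<in>{1..N}. d j \<in> K" and dT: "\<forall>p\<in>T. (\<Oplus> j\<in>{1..N}. d j \<otimes> Gout j p) = \<zero>"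
    have eqs: "finsum K' (\<lambda>j. c j \<otimes>\<^bsub>K'\<^esub> Gout j p) {1..N} = (\<Oplus> j\<in>{1..N}. c j \<otimes> Gout j p)"
      if "p \<in> grid m n" "\<forall>j\<in>{1..N}. c j \<in> K" for p c
    proof -
      have e: "(\<lambda>j. c j \<otimes>\<^bsub>K'\<^esub> Gout j p) = (\<lambda>j. c j \<otimes> Gout j p)" unfolding K'_def by simp
      show ?thesis unfolding e unfolding K'_def using that Gout_K K_mult unfolding N_def by (intro finsum_K) auto
    qed
    define x where "x = (\<lambda>p. if p \<in> grid m n then finsum K' (\<lambda>j. d j \<otimes>\<^bsub>K'\<^esub> Gout j p) {1..N} else \<zero>\<^bsub>K'\<^esub>)"
    define y where "y = (\<lambda>p. if p \<in> grid m n then finsum K' (\<lambda>j. (\<lambda>_. \<zero>) j \<otimes>\<^bsub>K'\<^esub> Gout j p) {1..N} else \<zero>\<^bsub>K'\<^esub>)"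
    have xC: "x \<in> Cout" unfolding Cout_def span_rows_def x_def K'_def N_def using dK unfolding N_def by auto
    have yC: "y \<in> Cout" unfolding Cout_def span_rows_def y_def K'_def N_def using K_zero by auto
    have "\<forall>p\<in>grid m n - E'. x p = y p"
    proof
      fix p assume p: "p \<in> grid m n - E'"
      have "x p = (\<Oplus> j\<in>{1..N}. d j \<otimes> Gout j p)" unfolding x_def using p eqs dK by auto
      also have "\<dots> = \<zero>" using dT p unfolding T_def by auto
      also have "\<zero> = (\<Oplus> j\<in>{1..N}. \<zero> \<otimes> Gout j p)"
      proof -
        have "(\<Oplus> j\<in>{1..N}. \<zero> \<otimes> Gout j p) = (\<Oplus> j\<in>{1..N}. \<zero>)"
          using Gout_K p Kc unfolding N_def by (intro finsum_cong') auto
        then show ?thesis by simp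
      qed
      also have "\<dots> = y p" unfolding y_def using p eqs[of p "\<lambda>_. \<zero>"] K_zero by auto
      finally show "x p = y p" .
    qed
    then have "x = y" using corrE xC yC unfolding corrects_def by blast
    then have "finsum K' (\<lambda>j. d j \<otimes>\<^bsub>K'\<^esub> Gout j p) {1..N} = \<zero>\<^bsub>K'\<^esub>" if "p \<in> grid m n" for p
    proof -
      have "finsum K' (\<lambda>j. d j \<otimes>\<^bsub>K'\<^esub> Gout j p) {1..N} = (\<Oplus> j\<in>{1..N}. d j \<otimes> Gout j p)"
        using eqs[OF that] dK by auto
      also have "\<dots> = x p" unfolding x_def using that eqs dK by auto
      also have "\<dots> = y p" using \<open>x = y\<close> by simp
      also have "\<dots> = (\<Oplus> j\<in>{1..N}. \<zero> \<otimes> Gout j p)" unfolding y_def using that eqs[of p "\<lambda>_. \<zero>"] K_zero by auto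
      also have "\<dots> = (\<Oplus> j\<in>{1..N}. \<zero>)"
        using Gout_K that Kc unfolding N_def by (intro finsum_cong') auto
      finally show ?thesis unfolding K'_def by simp
    qed
    then show "\<forall>j\<in>{1..N}. d j = \<zero>"
      using Gout_indep dK unfolding lin_indep_rows_def K'_def N_def by auto
  qed
  define M where "M = mat_mult L {1..N} (gab_gen L q g) Gout"
  have M_eq: "M i p = (\<Oplus> j\<in>{1..N}. g j [^] (q ^ (i - 1)) \<otimes> Gout j p)" for i p
    unfolding M_def mat_mult_def gab_gen_def by simp
  have Mc: "M i p \<in> carrier L" if "p \<in> grid m n" for i p
    unfolding M_eq using g_L Gout_K that Kc unfolding N_def by (intro finsum_closed) auto
  have "corrects m n (span_rows L (grid m n) {1..N - h} M) (E' \<union> I)"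
    unfolding corrects_def
  proof (intro ballI impI)
    fix x y assume x: "x \<in> span_rows L (grid m n) {1..N - h} M" and y: "y \<in> span_rows L (grid m n) {1..N - h} M"
      and agree: "\<forall>p\<in>grid m n - (E' \<union> I). x p = y p"
    obtain c1 where c1: "\<forall>i\<in>{1..N - h}. c1 i \<in> carrier L"
      "x = (\<lambda>p. if p \<in> grid m n then (\<Oplus> i\<in>{1..N - h}. c1 i \<otimes> M i p) else \<zero>)"
      using x unfolding span_rows_def by auto
    obtain c2 where c2: "\<forall>i\<in>{1..N - h}. c2 i \<in> carrier L"
      "y = (\<lambda>p. if p \<in> grid m n then (\<Oplus> i\<in>{1..N - h}. c2 i \<otimes> M i p) else \<zero>)"
      using y unfolding span_rows_def by auto
    define c where "c i = c1 i \<ominus> c2 i" for i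
    have cc: "\<forall>i\<in>{1..N - h}. c i \<in> carrier L" using c1 c2 unfolding c_def by auto
    have van: "\<forall>p\<in>T - I. (\<Oplus> i\<in>{1..N - h}. c i \<otimes> (\<Oplus> j\<in>{1..N}. g j [^] (q ^ (i - 1)) \<otimes> Gout j p)) = \<zero>"
    proof
      fix p assume p: "p \<in> T - I"
      then have pg: "p \<in> grid m n" unfolding T_def by auto
      let ?S1 = "\<Oplus> i\<in>{1..N - h}. c1 i \<otimes> M i p"
      let ?S2 = "\<Oplus> i\<in>{1..N - h}. c2 i \<otimes> M i p"
      let ?X = "\<Oplus> i\<in>{1..N - h}. c i \<otimes> M i p"
      have S12: "?S1 = ?S2" using agree p pg unfolding T_def c1(2) c2(2) by auto
      have cl: "?X \<in> carrier L" "?S2 \<in> carrier L" using cc c2 Mc[OF pg] by (auto intro: finsum_closed)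
      have "?X \<oplus> ?S2 = (\<Oplus> i\<in>{1..N - h}. c i \<otimes> M i p \<oplus> c2 i \<otimes> M i p)"
        using cc c2 Mc[OF pg] by (intro finsum_addf[symmetric]) auto
      also have "\<dots> = ?S1"
      proof (intro finsum_cong')
        fix i assume i: "i \<in> {1..N - h}"
        have "c1 i \<in> carrier L" "c2 i \<in> carrier L" "M i p \<in> carrier L" using i c1 c2 Mc[OF pg] by auto
        then show "c i \<otimes> M i p \<oplus> c2 i \<otimes> M i p = c1 i \<otimes> M i p" unfolding c_def by algebra
      qed (use c1 Mc[OF pg] in auto)
      finally have "?X \<oplus> ?S2 = ?S2" using S12 by simp
      then have "?X = \<zero>" using add.r_cancel_one[OF cl(2) cl(1)] by simp
      then show "(\<Oplus> i\<in>{1..N - h}. c i \<otimes> (\<Oplus> j\<in>{1..N}. g j [^] (q ^ (i - 1)) \<otimes> Gout j p)) = \<zero>"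
        unfolding M_eq by simp
    qed
    have GK: "\<forall>j\<in>{1..N}. \<forall>p\<in>T. Gout j p \<in> K" using Gout_K unfolding T_def N_def by auto
    have IT: "I \<subseteq> T" using I unfolding T_def .
    have c0: "\<forall>i\<in>{1..N - h}. c i = \<zero>"
      by (rule core[OF _ _ GK oc Tfin IT cI cc van]) (use g_L g_indep in \<open>auto simp: N_def\<close>)
    have "c1 i = c2 i" if "i \<in> {1..N - h}" for i
      using c0 that c1 c2 unfolding c_def by (metis r_right_minus_eq)
    then show "x = y" unfolding c1(2) c2(2)
      using c2(1) by (intro ext) (auto intro!: finsum_cong' simp: Mc)
  qed
  then show "corrects m n (span_rows L (grid m n) {1..(m - a) * (n - b) - h}
          (mat_mult L {1..(m - a) * (n - b)} (gab_gen L q g) Gout)) (E' \<union> I)"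
    unfolding M_def N_def .
qed


end

theorem theorem1:
  fixes L :: "'a ring" and K :: "'a set"
    and q s m n a b h :: nat
    and Cout :: "(nat \<times> nat \<Rightarrow> 'a) set"
    and Gout :: "nat \<Rightarrow> nat \<times> nat \<Rightarrow> 'a"
    and g :: "nat \<Rightarrow> 'a"
  assumes q_pp: "\<exists>p k. Factorial_Ring.prime (p::nat) \<and> k > 0 \<and> q = p ^ k"
    and L_field: "field L" and L_fin: "finite (carrier L)" and L_card: "card (carrier L) = q ^ s"
    and K_sub: "subfield K L" and K_card: "card K = q"
    and ma: "m > a" and nb: "n > b"
    and h_le: "h \<le> (m - a) * (n - b) - max (m - a) (n - b)"
    and Gout_K: "\<forall>i\<in>{1..(m - a) * (n - b)}. \<forall>p\<in>grid m n. Gout i p \<in> K"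
    and Gout_indep: "lin_indep_rows (L\<lparr>carrier := K\<rparr>) (grid m n) {1..(m - a) * (n - b)} Gout"
    and Cout_def: "Cout = span_rows (L\<lparr>carrier := K\<rparr>) (grid m n) {1..(m - a) * (n - b)} Gout"
    and Cout_MR: "MR_code (L\<lparr>carrier := K\<rparr>) m n a b 0 Cout"
    and s_ge: "s \<ge> (m - a) * (n - b)"
    and g_L: "\<forall>j\<in>{1..(m - a) * (n - b)}. g j \<in> carrier L"
    and g_indep: "\<forall>c. (\<forall>j\<in>{1..(m - a) * (n - b)}. c j \<in> K) \<longrightarrow>
        (\<Oplus>\<^bsub>L\<^esub> j\<in>{1..(m - a) * (n - b)}. c j \<otimes>\<^bsub>L\<^esub> g j) = \<zero>\<^bsub>L\<^esub> \<longrightarrow>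
        (\<forall>j\<in>{1..(m - a) * (n - b)}. c j = \<zero>\<^bsub>L\<^esub>)"
  shows "\<forall>E' I. max_correctable m n a b 0 E' \<longrightarrow> I \<subseteq> grid m n - E' \<longrightarrow> card I = h \<longrightarrow>
     corrects m n
       (span_rows L (grid m n) {1..(m - a) * (n - b) - h}
          (mat_mult L {1..(m - a) * (n - b)} (gab_gen L q g) Gout))
       (E' \<union> I)"
proof -
  interpret gsetting L K q
    using L_field K_sub K_card q_pp L_fin by (simp add: gsetting_def gsetting_axioms_def)
  show ?thesis by (rule main) (use assms in auto)
qed

end
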